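(* Let $p,g_1,\dots,g_m$, $S$, $d$, $R$, $\eta_1,\dots,\eta_m$, $\beta$ and $f_\gamma$ be as in the context. Then, for any $\gamma\in\mathbb{R}$, $\gamma$ is a strict lower bound on the problem $\inf\{p(x): x\in S\}$ (i.e., $p(x)>\gamma$ for all $x\in S$) if and only if the form $f_\gamma$, which is a sum of squares, homogeneous of degree $4d$ and in the $n+m+3$ variables $(x_1,\dots,x_n,s_0,\dots,s_m,s_{m+1},y)$, is positive definite (i.e., $f_\gamma(z)>0$ for all nonzero $z\in\mathbb{R}^{n+m+3}$).
   Context: Let $p,g_1,\dots,g_m$ be real polynomials in $x=(x_1,\dots,x_n)$ and let $S=\{x\in\mathbb{R}^n : g_i(x)\ge 0,\ i=1,\dots,m\}$. Let $d\ge 1$ be the integer such that $2d$ is the smallest even integer larger than or equal to the maximum of the degrees of $p,g_1,\dots,g_m$. Assume there is $R>0$ with $\sum_{i=1}^n x_i^2\le R$ for all $x\in S$ (the paper describes this as $S$ being contained in a ball of radius $R$). Let $\eta_1,\dots,\eta_m$ be real numbers with $g_i(x)\le\eta_i$ for all $x\in S$, and let $\beta$ be a real number with $-p(x)\le\beta$ for all $x\in S$. For a polynomial $q$ in $x$ of degree at most $2d$, $y^{2d}q(x/y)$ denotes the homogenization of $q$ to a form of degree $2d$ in $(x,y)$. For $\gamma\in\mathbb{R}$ define the form in the variables $(x,s,y)=(x_1,\dots,x_n,s_0,\dots,s_{m+1},y)$: $$f_\gamma(x,s,y)=\big(\gamma y^{2d}-y^{2d}p(x/y)-s_0^2y^{2d-2}\big)^2+\sum_{i=1}^m\big(y^{2d}g_i(x/y)-s_i^2y^{2d-2}\big)^2+\Big(\big(R+\textstyle\sum_{i=1}^m\eta_i+\beta+\gamma\big)^d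 y^{2d}-\big(\sum_{i=1}^n x_i^2+\sum_{i=0}^m s_i^2\big)^d-s_{m+1}^{2d}\Big)^2.$$ *)

theory Defs
  imports Complex_Main
begin

text \<open>Real polynomials in the variables x_0,...,x_(n-1) (the paper's x_1..x_n), represented
by a coefficient function on exponent vectors (monomial x^a has exponent vector a).\<close>

definition supp :: "((nat \<Rightarrow> nat) \<Rightarrow> real) \<Rightarrow> (nat \<Rightarrow> nat) set" where
  "supp c = {a. c a \<noteq> 0}"

definition is_poly :: "nat \<Rightarrow> ((nat \<Rightarrow> nat) \<Rightarrow> real) \<Rightarrow> bool" where
  "is_poly n c \<longleftrightarrow> finite (supp c) \<and> (\<forall>a\<in>supp c. \<forall>i\<ge>n. a i = 0)"

definition mdeg :: "nat \<Rightarrow> (nat \<Rightarrow> nat) \<Rightarrow> nat" where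
  "mdeg n a = (\<Sum>i<n. a i)"

definition poly_deg :: "nat \<Rightarrow> ((nat \<Rightarrow> nat) \<Rightarrow> real) \<Rightarrow> nat" where
  "poly_deg n c = Max (insert 0 (mdeg n ` supp c))"

definition peval :: "nat \<Rightarrow> ((nat \<Rightarrow> nat) \<Rightarrow> real) \<Rightarrow> (nat \<Rightarrow> real) \<Rightarrow> real" where
  "peval n c x = (\<Sum>a\<in>supp c. c a * (\<Prod>i<n. x i ^ a i))"

text \<open>Homogenization y^k q(x/y) of a polynomial q of degree at most k.\<close>
definition homog :: "nat \<Rightarrow> nat \<Rightarrow> ((nat \<Rightarrow> nat) \<Rightarrow> real) \<Rightarrow> (nat \<Rightarrow> real) \<Rightarrow> real \<Rightarrow> real" where
  "homog n k c x y = (\<Sum>a\<in>supp c. c a * (\<Prod>i<n. x i ^ a i) * y ^ (k - mdeg n a))"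

text \<open>The form f_gamma(x,s,y); s is indexed by 0..m+1, g and eta by 1..m.\<close>
definition f_gamma :: "nat \<Rightarrow> nat \<Rightarrow> nat \<Rightarrow> ((nat \<Rightarrow> nat) \<Rightarrow> real) \<Rightarrow> (nat \<Rightarrow> (nat \<Rightarrow> nat) \<Rightarrow> real)
    \<Rightarrow> real \<Rightarrow> (nat \<Rightarrow> real) \<Rightarrow> real \<Rightarrow> real \<Rightarrow> (nat \<Rightarrow> real) \<Rightarrow> (nat \<Rightarrow> real) \<Rightarrow> real \<Rightarrow> real" where
  "f_gamma n m d p g R \<eta> \<beta> \<gamma> x s y =
     (\<gamma> * y ^ (2*d) - homog n (2*d) p x y - (s 0)\<^sup>2 * y ^ (2*d - 2))\<^sup>2
   + (\<Sum>i=1..m. (homog n (2*d) (g i) x y - (s i)\<^sup>2 * y ^ (2*d - 2))\<^sup>2)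
   + ((R + (\<Sum>i=1..m. \<eta> i) + \<beta> + \<gamma>) ^ d * y ^ (2*d)
       - ((\<Sum>i<n. (x i)\<^sup>2) + (\<Sum>i\<le>m. (s i)\<^sup>2)) ^ d - (s (m+1)) ^ (2*d))\<^sup>2"

end

theory Submission
  imports Defs
begin

lemma homog_eq:
  assumes fin: "finite (supp c)" and deg: "poly_deg n c \<le> k" and y: "y \<noteq> 0"
  shows "homog n k c x y = y ^ k * peval n c (\<lambda>i. x i / y)"
  unfolding homog_def peval_def sum_distrib_left
proof (rule sum.cong[OF refl])
  fix a assume a: "a \<in> supp c"
  have "mdeg n a \<le> poly_deg n c" unfolding poly_deg_def
    using fin a by (intro Max_ge) auto
  with deg have le: "mdeg n a \<le> k" by simp
  have "(\<Prod>i<n. (x i / y) ^ a i) = (\<Prod>i<n. x i ^ a i) / y ^ mdeg n a"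
    by (simp add: power_divide prod_dividef mdeg_def power_sum)
  moreover have "y ^ k = y ^ (k - mdeg n a) * y ^ mdeg n a"
    using le by (simp flip: power_add)
  ultimately show "c a * (\<Prod>i<n. x i ^ a i) * y ^ (k - mdeg n a) =
      y ^ k * (c a * (\<Prod>i<n. (x i / y) ^ a i))" using y by simp
qed

lemma homog_1:
  assumes "finite (supp c)" "poly_deg n c \<le> k"
  shows "homog n k c x 1 = peval n c x"
  using homog_eq[OF assms, of 1 x] by simp

theorem theorem2p1:
  fixes n m d :: nat and p :: "(nat \<Rightarrow> nat) \<Rightarrow> real" and g :: "nat \<Rightarrow> (nat \<Rightarrow> nat) \<Rightarrow> real"
    and S :: "(nat \<Rightarrow> real) set" and R \<beta> \<gamma> :: real and \<eta> :: "nat \<Rightarrow> real"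
  assumes p_poly: "is_poly n p"
    and g_poly: "\<forall>i\<in>{1..m}. is_poly n (g i)"
    and S_def: "S = {x. \<forall>i\<in>{1..m}. peval n (g i) x \<ge> 0}"
    and d_ge1: "d \<ge> 1"
    and deg_le: "poly_deg n p \<le> 2*d \<and> (\<forall>i\<in>{1..m}. poly_deg n (g i) \<le> 2*d)"
    and d_min: "d = 1 \<or> poly_deg n p > 2*d - 2 \<or> (\<exists>i\<in>{1..m}. poly_deg n (g i) > 2*d - 2)"
    and R_pos: "R > 0"
    and ball: "\<forall>x\<in>S. (\<Sum>i<n. (x i)\<^sup>2) \<le> R"
    and eta: "\<forall>i\<in>{1..m}. \<forall>x\<in>S. peval n (g i) x \<le> \<eta> i"
    and beta: "\<forall>x\<in>S. - peval n p x \<le> \<beta>"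
  shows "(\<forall>x\<in>S. peval n p x > \<gamma>) \<longleftrightarrow>
    (\<forall>x s y. ((\<exists>i<n. x i \<noteq> 0) \<or> (\<exists>i\<le>m+1. s i \<noteq> 0) \<or> y \<noteq> 0)
        \<longrightarrow> f_gamma n m d p g R \<eta> \<beta> \<gamma> x s y > 0)"
proof
  have pfin: "finite (supp p)" using p_poly by (simp add: is_poly_def)
  have gfin: "finite (supp (g i))" if "i \<in> {1..m}" for i
    using g_poly that by (simp add: is_poly_def)
  have pdeg: "poly_deg n p \<le> 2*d" using deg_le by simp
  have gdeg: "poly_deg n (g i) \<le> 2*d" if "i \<in> {1..m}" for i using deg_le that by simp
  let ?A = "R + (\<Sum>i=1..m. \<eta> i) + \<beta> + \<gamma>"
  show "(\<forall>x\<in>S. peval n p x > \<gamma>) \<Longrightarrow> (\<forall>x s y. ((\<exists>i<n. x i \<noteq> 0) \<or> (\<exists>i\<le>m+1. s i \<noteq> 0) \<or> y \<noteq> 0)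
        \<longrightarrow> f_gamma n m d p g R \<eta> \<beta> \<gamma> x s y > 0)"
  proof (intro allI impI)
    fix x s :: "nat \<Rightarrow> real" and y :: real
    assume H: "\<forall>x\<in>S. peval n p x > \<gamma>"
      and nz: "(\<exists>i<n. x i \<noteq> 0) \<or> (\<exists>i\<le>m+1. s i \<noteq> 0) \<or> y \<noteq> 0"
    define T1 where "T1 = (\<gamma> * y ^ (2*d) - homog n (2*d) p x y - (s 0)\<^sup>2 * y ^ (2*d - 2))"
    define T2 where "T2 = (\<lambda>i. homog n (2*d) (g i) x y - (s i)\<^sup>2 * y ^ (2*d - 2))"
    define B where "B = (\<Sum>i<n. (x i)\<^sup>2) + (\<Sum>i\<le>m. (s i)\<^sup>2)"
    define T3 where "T3 = ?A ^ d * y ^ (2*d) - B ^ d - (s (m+1)) ^ (2*d)"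
    have f: "f_gamma n m d p g R \<eta> \<beta> \<gamma> x s y = T1\<^sup>2 + (\<Sum>i=1..m. (T2 i)\<^sup>2) + T3\<^sup>2"
      unfolding f_gamma_def T1_def T2_def T3_def B_def by simp
    have s2: "(\<Sum>i=1..m. (T2 i)\<^sup>2) \<ge> 0" by (intro sum_nonneg) simp
    show "f_gamma n m d p g R \<eta> \<beta> \<gamma> x s y > 0"
    proof (rule ccontr)
      assume "\<not> ?thesis"
      hence "T1\<^sup>2 + (\<Sum>i=1..m. (T2 i)\<^sup>2) + T3\<^sup>2 = 0" using f s2
        by (smt (verit) zero_le_power2)
      hence z1: "T1 = 0" and z2: "(\<Sum>i=1..m. (T2 i)\<^sup>2) = 0" and z3: "T3 = 0"
        using s2 by (smt (verit) zero_le_power2 power_eq_0_iff)+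
      have z2': "T2 i = 0" if "i \<in> {1..m}" for i
        using z2 sum_nonneg_eq_0_iff[of "{1..m}" "\<lambda>i. (T2 i)\<^sup>2"] that by simp
      show False
      proof (cases "y = 0")
        case True
        have B0: "B \<ge> 0" unfolding B_def by (intro add_nonneg_nonneg sum_nonneg) auto
        have "y ^ (2*d) = 0" using True d_ge1 by simp
        hence "B ^ d + (s (m+1)) ^ (2*d) = 0" using z3 unfolding T3_def by (simp del: power_eq_0_iff)
        moreover have "B ^ d \<ge> 0" using B0 by simp
        moreover have "(s (m+1)) ^ (2*d) \<ge> 0" by (simp add: power_mult)
        ultimately have "B ^ d = 0" "(s (m+1)) ^ (2*d) = 0" by linarith+
        hence B: "B = 0" and sm: "s (m+1) = 0" using d_ge1 by auto
        have "(\<Sum>i<n. (x i)\<^sup>2) = 0" "(\<Sum>i\<le>m. (s i)\<^sup>2) = 0"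
          using B unfolding B_def by (smt (verit) sum_nonneg zero_le_power2)+
        hence "\<forall>i<n. x i = 0" "\<forall>i\<le>m. s i = 0"
          by (simp_all add: sum_nonneg_eq_0_iff)
        hence "\<forall>i\<le>m+1. s i = 0" using sm by (metis le_Suc_eq Suc_eq_plus1)
        thus False using nz True \<open>\<forall>i<n. x i = 0\<close> by auto
      next
        case False
        define x' where "x' = (\<lambda>i. x i / y)"
        have yk: "y ^ (2*d) = y ^ (2*d-2) * y\<^sup>2"
        proof -
          have "2*d = (2*d-2) + 2" using d_ge1 by simp
          hence "y ^ (2*d) = y ^ ((2*d-2) + 2)" by simp
          thus ?thesis by (simp only: power_add)
        qed
        have yp: "y ^ (2*d-2) \<noteq> 0" using False by simp
        have "y ^ (2*d-2) * (y\<^sup>2 * (\<gamma> - peval n p x') - (s 0)\<^sup>2) = 0"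
          using z1 unfolding T1_def homog_eq[OF pfin pdeg False] x'_def yk
          by (simp add: algebra_simps)
        hence "y\<^sup>2 * (\<gamma> - peval n p x') = (s 0)\<^sup>2" using yp mult_eq_0_iff by (metis right_minus_eq)
        hence "\<gamma> - peval n p x' \<ge> 0" using False
          by (metis zero_le_power2 zero_less_power2 zero_le_mult_iff not_le)
        moreover have "x' \<in> S" unfolding S_def
        proof (safe)
          fix i assume i: "i \<in> {1..m}"
          have "y ^ (2*d-2) * (y\<^sup>2 * peval n (g i) x' - (s i)\<^sup>2) = 0"
            using z2'[OF i] unfolding T2_def homog_eq[OF gfin[OF i] gdeg[OF i] False] x'_def yk
            by (simp add: algebra_simps)
          hence "y\<^sup>2 * peval n (g i) x' = (s i)\<^sup>2" using yp mult_eq_0_iff by (metis right_minus_eq)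
          thus "peval n (g i) x' \<ge> 0" using False
            by (metis zero_le_power2 zero_less_power2 zero_le_mult_iff not_le)
        qed
        ultimately show False using H by force
      qed
    qed
  qed
next
  assume H: "\<forall>x s y. ((\<exists>i<n. x i \<noteq> 0) \<or> (\<exists>i\<le>m+1. s i \<noteq> 0) \<or> y \<noteq> 0)
        \<longrightarrow> f_gamma n m d p g R \<eta> \<beta> \<gamma> x s y > 0"
  have pfin: "finite (supp p)" using p_poly by (simp add: is_poly_def)
  have gfin: "finite (supp (g i))" if "i \<in> {1..m}" for i
    using g_poly that by (simp add: is_poly_def)
  have pdeg: "poly_deg n p \<le> 2*d" using deg_le by simp
  have gdeg: "poly_deg n (g i) \<le> 2*d" if "i \<in> {1..m}" for i using deg_le that by simp
  let ?A = "R + (\<Sum>i=1..m. \<eta> i) + \<beta> + \<gamma>"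
  show "\<forall>x\<in>S. peval n p x > \<gamma>"
  proof (rule ccontr)
    assume "\<not> ?thesis"
    then obtain x where xS: "x \<in> S" and px: "peval n p x \<le> \<gamma>" by force
    have gx: "peval n (g i) x \<ge> 0" if "i \<in> {1..m}" for i using xS that S_def by auto
    define B where "B = (\<Sum>i<n. (x i)\<^sup>2) + (\<gamma> - peval n p x) + (\<Sum>i=1..m. peval n (g i) x)"
    have B0: "B \<ge> 0" unfolding B_def using px gx
      by (intro add_nonneg_nonneg sum_nonneg) auto
    have "(\<Sum>i=1..m. peval n (g i) x) \<le> (\<Sum>i=1..m. \<eta> i)"
      using eta xS by (intro sum_mono) auto
    hence BA: "B \<le> ?A" unfolding B_def using ball xS beta by force
    have dd: "B ^ d \<le> ?A ^ d" using B0 BA by (intro power_mono)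
    define s where "s = (\<lambda>i. if i = 0 then sqrt (\<gamma> - peval n p x)
       else if i \<le> m then sqrt (peval n (g i) x) else root (2*d) (?A ^ d - B ^ d))"
    have s0: "(s 0)\<^sup>2 = \<gamma> - peval n p x" unfolding s_def using px by simp
    have si: "(s i)\<^sup>2 = peval n (g i) x" if "i \<in> {1..m}" for i
      unfolding s_def using gx[OF that] that by simp
    have sm: "(s (m+1)) ^ (2*d) = ?A ^ d - B ^ d" unfolding s_def
      using dd d_ge1 by (simp add: real_root_pow_pos2)
    have "{..m} = insert 0 {1..m}" by auto
    hence ssum: "(\<Sum>i\<le>m. (s i)\<^sup>2) = (\<gamma> - peval n p x) + (\<Sum>i=1..m. peval n (g i) x)"
      using s0 si by (simp add: sum.insert)
    have "f_gamma n m d p g R \<eta> \<beta> \<gamma> x s 1 = 0"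
      unfolding f_gamma_def homog_1[OF pfin pdeg] s0
      using si homog_1[OF gfin gdeg] ssum sm unfolding B_def
      by (simp add: add.assoc)
    moreover have "f_gamma n m d p g R \<eta> \<beta> \<gamma> x s 1 > 0" using H by auto
    ultimately show False by simp
  qed
qed

end
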